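(* Let $F$ be a $4$-regular graph, let $D$ be a directed version of $F$, let $\mathbf o$ be a transitional orientation of $F$, let $\Gamma$ be a set of closed walks of $F$, and let $P$ be a circuit partition of $F$. Then $\mathrm{CM}(\mathrm{Tch}(P),\pi_P(\Gamma),\mathrm{Tch}_{\mathbf o}(P))$ is equal to $\mathrm{CM}(F,\Gamma,D)\cdot\Delta_{D,\mathbf o}|_{\tau(P)}$, after relabeling each row index $\pi_P(W)$ of the former matrix by $W$.
   Context: Graphs: $G=(V,H,E,\epsilon)$ with finite sets of vertices $V$ and half-edges $H$, a partition $E$ of $H$ into unordered pairs (edges), and $\epsilon:H\to V$; loops and multiple edges allowed. A directed version orders each edge as (tail, head). A single transition is an unordered pair of distinct half-edges incident with a common vertex; a directed single transition is such an ordered pair. A closed walk is a sequence $((h_1,h_2),\dots,(h_{n-1},h_n))$ of directed single transitions with $\{h_2,h_3\},\{h_4,h_5\},\dots,\{h_n,h_1\}$ edges, up to cyclic shift. For a directed version $D$ and closed walk $W$, $\sigma(D,W)\in\mathbb Z^{E}$ counts, at each edge $e$, traversals of $e$ along its direction minus traversals against it. A circuit is a nonempty closed walk using each half-edge at most once, with orientation forgotten. For a (multi)set $\Gamma$ of closed walks of $G$ and a directed version $D$, the cycle matrix $\mathrm{CM}(G,\Gamma,D)$ is the $\Gamma\times E(G)$ integer matrix whose row indexed by $W$ is $\sigma(D,W)$. $F$ is $4$-regular if every vertex is incident with exactly $4$ half-edges. A transition at $v$ is a partition of the four half-edges at $v$ into two single transitions; $\mathfrak T(F)$ is the set of transitions.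 A circuit partition $P$ is a set of circuits of $F$ such that every half-edge lies in exactly one single transition of exactly one circuit of $P$; $\tau(P)$ is the set of transitions both of whose single transitions occur in circuits of $P$. The touch-graph $\mathrm{Tch}(P)$ has vertex set $P$, half-edge set the set of single transitions occurring in circuits of $P$, edge set $\tau(P)$, and maps each single transition to the circuit containing it. A transitional orientation $\mathbf o$ assigns to each $t\in\mathfrak T(F)$ one of its two single transitions $\mathbf o(t)$; $\mathrm{Tch}_{\mathbf o}(P)$ is the directed version of $\mathrm{Tch}(P)$ in which each edge $t$ has head $\mathbf o(t)$ and tail the other single transition of $t$. For a closed walk $W$ of $F$, $\pi_P(W)$ is obtained by replacing each directed single transition $(h,h')$ of $W$ by $(s,s')$, where $s,s'$ are the single transitions of circuits of $P$ containing $h,h'$, and deleting pairs with $s=s'$; it is a closed walk of $\mathrm{Tch}(P)$ in which each remaining $(s,s')$ traverses edge $\{s,s'\}$ from half-edge $s$ to half-edge $s'$. $\pi_P(\Gamma)$ is the multiset $\{\pi_P(W):W\in\Gamma\}$. The edge-transition incidence matrix $\Delta_{D,\mathbf o}$ is the $E(F)\times\mathfrak T(F)$ matrix over $\mathbb Q$ whose $(e,t)$ entry is $1$ if $e\cap\mathbf o(t)=\{h\}$ with $h$ the tail of $e$ in $D$, $-1$ if $e\cap\mathbf o(t)=\{h\}$ with $h$ the head of $e$ in $D$, and $0$ otherwise; $A|_Y$ denotes the restriction to the columns in $Y$. *)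

theory Defs
  imports Main "HOL.Rat"
begin

record ('v, 'h) hgraph =
  verts :: "'v set"
  halfs :: "'h set"
  edges :: "'h set set"
  inc   :: "'h \<Rightarrow> 'v"

definition graph_wf :: "('v, 'h) hgraph \<Rightarrow> bool" where
  "graph_wf G \<longleftrightarrow> finite (verts G) \<and> finite (halfs G)
     \<and> (\<forall>e\<in>edges G. card e = 2 \<and> e \<subseteq> halfs G)
     \<and> (\<forall>h\<in>halfs G. \<exists>!e. e \<in> edges G \<and> h \<in> e)
     \<and> (\<forall>h\<in>halfs G. inc G h \<in> verts G)"

text \<open>A directed version is given by choosing the tail of every edge.\<close>
definition directed_version :: "('v, 'h) hgraph \<Rightarrow> ('h set \<Rightarrow> 'h) \<Rightarrow> bool" where
  "directed_version G tlf \<longleftrightarrow> (\<forall>e\<in>edges G. tlf e \<in> e)"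

definition head_of :: "('h set \<Rightarrow> 'h) \<Rightarrow> 'h set \<Rightarrow> 'h" where
  "head_of tlf e = (THE h. h \<in> e \<and> h \<noteq> tlf e)"

definition four_regular :: "('v, 'h) hgraph \<Rightarrow> bool" where
  "four_regular G \<longleftrightarrow> (\<forall>v\<in>verts G. card {h\<in>halfs G. inc G h = v} = 4)"

definition single_trans :: "('v, 'h) hgraph \<Rightarrow> 'h set \<Rightarrow> bool" where
  "single_trans G s \<longleftrightarrow> (\<exists>h h'. s = {h, h'} \<and> h \<noteq> h' \<and> h \<in> halfs G \<and> h' \<in> halfs G
      \<and> inc G h = inc G h')"

definition dir_single_trans :: "('v, 'h) hgraph \<Rightarrow> 'h \<times> 'h \<Rightarrow> bool" where
  "dir_single_trans G p \<longleftrightarrow> (case p of (h, h') \<Rightarrow>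
      h \<noteq> h' \<and> h \<in> halfs G \<and> h' \<in> halfs G \<and> inc G h = inc G h')"

text \<open>A closed walk ((h1,h2),...,(h(n-1),hn)) is a list of directed single transitions,
  where the second half-edge of each pair together with the first half-edge of the
  (cyclically) next pair forms an edge. Cyclic shifts are different lists, but everything
  below is invariant under them.\<close>
definition closed_walk :: "('v, 'h) hgraph \<Rightarrow> ('h \<times> 'h) list \<Rightarrow> bool" where
  "closed_walk G W \<longleftrightarrow> (\<forall>p\<in>set W. dir_single_trans G p)
     \<and> (\<forall>i<length W. {snd (W ! i), fst (W ! (Suc i mod length W))} \<in> edges G)"

definition traversals :: "('h \<times> 'h) list \<Rightarrow> ('h \<times> 'h) list" where
  "traversals W = map (\<lambda>i. (snd (W ! i), fst (W ! (Suc i mod length W)))) [0..<length W]"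

definition sigma_trav :: "('h set \<Rightarrow> 'h) \<Rightarrow> ('h \<times> 'h) list \<Rightarrow> 'h set \<Rightarrow> int" where
  "sigma_trav tlf T e =
     int (length (filter (\<lambda>(x, y). {x, y} = e \<and> x = tlf e) T))
   - int (length (filter (\<lambda>(x, y). {x, y} = e \<and> y = tlf e) T))"

definition cw_sigma :: "('h set \<Rightarrow> 'h) \<Rightarrow> ('h \<times> 'h) list \<Rightarrow> 'h set \<Rightarrow> int" where
  "cw_sigma tlf W e = sigma_trav tlf (traversals W) e"

definition cycle_matrix :: "('v, 'h) hgraph \<Rightarrow> ('h \<times> 'h) list set \<Rightarrow> ('h set \<Rightarrow> 'h)
    \<Rightarrow> ('h \<times> 'h) list \<Rightarrow> 'h set \<Rightarrow> int" where
  "cycle_matrix G Gam tlf W e = (if W \<in> Gam \<and> e \<in> edges G then cw_sigma tlf W e else 0)"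

definition reverse_walk :: "('h \<times> 'h) list \<Rightarrow> ('h \<times> 'h) list" where
  "reverse_walk W = rev (map (\<lambda>(a, b). (b, a)) W)"

text \<open>A circuit is represented as the class of all its representing closed walks
  (all cyclic shifts of both orientations).\<close>
definition circuit :: "('v, 'h) hgraph \<Rightarrow> ('h \<times> 'h) list set \<Rightarrow> bool" where
  "circuit G C \<longleftrightarrow> (\<exists>W. closed_walk G W \<and> W \<noteq> []
      \<and> distinct (concat (map (\<lambda>(a, b). [a, b]) W))
      \<and> C = {W'. \<exists>k. W' = rotate k W \<or> W' = rotate k (reverse_walk W)})"

definition circ_sts :: "('h \<times> 'h) list set \<Rightarrow> 'h set set" where
  "circ_sts C = (\<lambda>(a, b). {a, b}) ` (\<Union>W\<in>C. set W)"

definition circuit_partition :: "('v, 'h) hgraph \<Rightarrow> ('h \<times> 'h) list set set \<Rightarrow> bool" where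
  "circuit_partition G P \<longleftrightarrow> (\<forall>C\<in>P. circuit G C)
     \<and> (\<forall>h\<in>halfs G. \<exists>!(C, s). C \<in> P \<and> s \<in> circ_sts C \<and> h \<in> s)"

definition ftrans :: "('v, 'h) hgraph \<Rightarrow> 'h set set set" where
  "ftrans G = {{s1, s2} | s1 s2 v. v \<in> verts G \<and> single_trans G s1 \<and> single_trans G s2
      \<and> s1 \<inter> s2 = {} \<and> s1 \<union> s2 = {h\<in>halfs G. inc G h = v}}"

definition tau :: "('v, 'h) hgraph \<Rightarrow> ('h \<times> 'h) list set set \<Rightarrow> 'h set set set" where
  "tau G P = {t\<in>ftrans G. \<forall>s\<in>t. \<exists>C\<in>P. s \<in> circ_sts C}"

definition trans_orientation :: "('v, 'h) hgraph \<Rightarrow> ('h set set \<Rightarrow> 'h set) \<Rightarrow> bool" where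
  "trans_orientation G ori \<longleftrightarrow> (\<forall>t\<in>ftrans G. ori t \<in> t)"

definition tch :: "('h \<times> 'h) list set set \<Rightarrow> 'h set set set
    \<Rightarrow> (('h \<times> 'h) list set, 'h set) hgraph" where
  "tch P T = \<lparr> verts = P, halfs = (\<Union>C\<in>P. circ_sts C), edges = T,
              inc = (\<lambda>s. THE C. C \<in> P \<and> s \<in> circ_sts C) \<rparr>"

definition touch_graph :: "('v, 'h) hgraph \<Rightarrow> ('h \<times> 'h) list set set
    \<Rightarrow> (('h \<times> 'h) list set, 'h set) hgraph" where
  "touch_graph G P = tch P (tau G P)"

text \<open>Directed version Tch_o(P): head of t is ori t, tail is the other single transition.\<close>
definition tch_tail :: "('h set set \<Rightarrow> 'h set) \<Rightarrow> 'h set set \<Rightarrow> 'h set" where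
  "tch_tail ori t = (THE s. s \<in> t \<and> s \<noteq> ori t)"

definition st_of :: "('h \<times> 'h) list set set \<Rightarrow> 'h \<Rightarrow> 'h set" where
  "st_of P h = (THE s. \<exists>C\<in>P. s \<in> circ_sts C \<and> h \<in> s)"

text \<open>The literal list of pairs (s,s') from the paper; each pair traverses edge {s,s'}.\<close>
definition pi_pairs :: "('h \<times> 'h) list set set \<Rightarrow> ('h \<times> 'h) list \<Rightarrow> ('h set \<times> 'h set) list" where
  "pi_pairs P W = filter (\<lambda>(s, s'). s \<noteq> s') (map (\<lambda>(h, h'). (st_of P h, st_of P h')) W)"

text \<open>Turn a cyclic list of edge traversals (a_i,b_i) into the closed-walk format
  ((b_k,a_1),(b_1,a_2),...,(b_(k-1),a_k)), whose traversals are exactly the (a_i,b_i).\<close>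
definition walk_of_trav :: "('a \<times> 'a) list \<Rightarrow> ('a \<times> 'a) list" where
  "walk_of_trav T = map (\<lambda>i. (snd (T ! ((i + length T - 1) mod length T)), fst (T ! i)))
                        [0..<length T]"

definition pi_walk :: "('h \<times> 'h) list set set \<Rightarrow> ('h \<times> 'h) list \<Rightarrow> ('h set \<times> 'h set) list" where
  "pi_walk P W = walk_of_trav (pi_pairs P W)"

definition Delta :: "('v, 'h) hgraph \<Rightarrow> ('h set \<Rightarrow> 'h) \<Rightarrow> ('h set set \<Rightarrow> 'h set)
    \<Rightarrow> 'h set \<Rightarrow> 'h set set \<Rightarrow> rat" where
  "Delta G tlf ori e t =
    (if e \<in> edges G \<and> t \<in> ftrans G \<and> (\<exists>h. e \<inter> ori t = {h}) then
       (let h = (THE h. e \<inter> ori t = {h}) in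
         if h = tlf e then 1 else if h = head_of tlf e then -1 else 0)
     else 0)"

end

theory Submission
  imports Defs
begin

lemma trav_wot: "traversals (walk_of_trav T) = T"
proof (rule nth_equalityI)
  show "length (traversals (walk_of_trav T)) = length T"
    by (simp add: traversals_def walk_of_trav_def)
next
  fix i assume i: "i < length (traversals (walk_of_trav T))"
  let ?n = "length T"
  have il: "i < ?n" using i by (simp add: traversals_def walk_of_trav_def)
  have np: "0 < ?n" using il by (cases T) auto
  have m: "Suc i mod ?n < ?n" using np by (rule mod_less_divisor)
  have k: "(Suc i mod ?n + ?n - 1) mod ?n = i"
  proof (cases "Suc i < ?n")
    case True then show ?thesis by simp
  next
    case False then have "Suc i = ?n" using il by simp
    then show ?thesis using il by simp
  qed
  show "traversals (walk_of_trav T) ! i = T ! i"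
    using il m k by (simp add: traversals_def walk_of_trav_def)
qed

lemma sigma_sum:
  "(of_int (sigma_trav tlx T e) :: rat) = sum_list (map (\<lambda>(x,y).
     (if {x,y} = e \<and> x = tlx e then 1 else 0) - (if {x,y} = e \<and> y = tlx e then 1 else 0)) T)"
  unfolding sigma_trav_def
  by (induction T) (auto split: prod.splits)

lemma sum_filter_irrel:
  assumes "\<And>x. \<not> Q x \<Longrightarrow> f x = (0::rat)"
  shows "sum_list (map f (filter Q xs)) = sum_list (map f xs)"
  using assms by (induction xs) auto

lemma swap_sum:
  "(\<Sum>e\<in>E. sum_list (map (g e) xs) * (c e :: rat)) = sum_list (map (\<lambda>p. \<Sum>e\<in>E. g e p * c e) xs)"
  by (induction xs) (auto simp: sum.distrib distrib_right)

lemma rot_sum: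
  fixes a :: "nat \<Rightarrow> rat"
  shows "(\<Sum>i<n. a (Suc i mod n)) = (\<Sum>i<n. a i)"
proof (cases n)
  case 0 then show ?thesis by simp
next
  case (Suc m)
  have "(\<Sum>i<Suc m. a (Suc i mod Suc m)) = (\<Sum>i<m. a (Suc i mod Suc m)) + a 0"
    by (simp add: sum.lessThan_Suc)
  also have "(\<Sum>i<m. a (Suc i mod Suc m)) = (\<Sum>i<m. a (Suc i))"
    by (rule sum.cong) auto
  also have "(\<Sum>i<m. a (Suc i)) + a 0 = (\<Sum>i<Suc m. a i)"
    by (simp only: sum.lessThan_Suc_shift)
  finally show ?thesis using Suc by simp
qed

lemma telescope:
  fixes Ob :: "'h set"
  shows "sum_list (map (\<lambda>(x,y). (if x \<in> Ob then 1 else 0) - (if y \<in> Ob then 1 else (0::rat))) (traversals W))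
   = sum_list (map (\<lambda>(h,h'). (if h' \<in> Ob then 1 else 0) - (if h \<in> Ob then 1 else (0::rat))) W)"
proof -
  let ?n = "length W"
  let ?a = "\<lambda>i. (if fst (W ! i) \<in> Ob then 1 else (0::rat))"
  let ?b = "\<lambda>i. (if snd (W ! i) \<in> Ob then 1 else (0::rat))"
  have "sum_list (map (\<lambda>(x,y). (if x \<in> Ob then 1 else 0) - (if y \<in> Ob then 1 else (0::rat))) (traversals W))
      = (\<Sum>i<?n. ?b i - ?a (Suc i mod ?n))"
    unfolding traversals_def
    by (simp add: sum_list_sum_nth atLeast0LessThan)
  also have "\<dots> = (\<Sum>i<?n. ?b i) - (\<Sum>i<?n. ?a (Suc i mod ?n))"
    by (simp add: sum_subtractf)
  also have "\<dots> = (\<Sum>i<?n. ?b i) - (\<Sum>i<?n. ?a i)"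
    using rot_sum[of ?a ?n] by simp
  also have "\<dots> = (\<Sum>i<?n. ?b i - ?a i)"
    by (simp add: sum_subtractf)
  also have "\<dots> = sum_list (map (\<lambda>(h,h'). (if h' \<in> Ob then 1 else 0) - (if h \<in> Ob then 1 else (0::rat))) W)"
    by (simp add: sum_list_sum_nth atLeast0LessThan prod.case_eq_if)
  finally show ?thesis .
qed


lemma head_of_pair:
  assumes "x \<noteq> y" "tlx {x,y} \<in> {x,y}"
  shows "head_of tlx {x,y} = (if tlx {x,y} = x then y else x)"
  unfolding head_of_def using assms by (auto intro!: the_equality)

lemma delta_trav:
  assumes "x \<noteq> y" "{x,y} \<in> edges F" "tlf {x,y} \<in> {x,y}" "t \<in> ftrans F"
  shows "((if {x,y}={x,y} \<and> x = tlf {x,y} then 1 else 0) - (if {x,y}={x,y} \<and> y = tlf {x,y} then 1 else 0))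
     * Delta F tlf ori {x,y} t = (if x \<in> ori t then 1 else 0) - (if y \<in> ori t then 1 else (0::rat))"
proof -
  have hd: "head_of tlf {x,y} = (if tlf {x,y} = x then y else x)"
    by (rule head_of_pair[of x y tlf, OF assms(1,3)])
  consider (a) "x \<in> ori t" "y \<in> ori t" | (b) "x \<in> ori t" "y \<notin> ori t"
    | (c) "x \<notin> ori t" "y \<in> ori t" | (d) "x \<notin> ori t" "y \<notin> ori t" by blast
  then show ?thesis
  proof cases
    case a
    then have "{x,y} \<inter> ori t = {x,y}" by auto
    then have "\<not> (\<exists>h. {x,y} \<inter> ori t = {h})" using assms(1) by (auto simp: doubleton_eq_iff)
    then show ?thesis using a by (simp add: Delta_def)
  next
    case b
    then have i: "{x,y} \<inter> ori t = {x}" using assms(1) by auto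
    then have th: "(THE h. {x,y} \<inter> ori t = {h}) = x" by simp
    show ?thesis using b assms i th hd by (auto simp: Delta_def Let_def)
  next
    case c
    then have i: "{x,y} \<inter> ori t = {y}" using assms(1) by auto
    then have th: "(THE h. {x,y} \<inter> ori t = {h}) = y" by simp
    show ?thesis using c assms i th hd by (auto simp: Delta_def Let_def)
  next
    case d
    then have "{x,y} \<inter> ori t = {}" by auto
    then show ?thesis using d by (simp add: Delta_def)
  qed
qed

lemma sum_edge:
  assumes "finite E" "{x,y} \<in> E"
  shows "(\<Sum>e\<in>E. ((if {x,y}=e \<and> x = tlf e then 1 else 0) - (if {x,y}=e \<and> y = tlf e then 1 else 0)) * (c e::rat))
    = ((if {x,y}={x,y} \<and> x = tlf {x,y} then 1 else 0) - (if {x,y}={x,y} \<and> y = tlf {x,y} then 1 else 0)) * c {x,y}"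
proof -
  have "(\<Sum>e\<in>E. ((if {x,y}=e \<and> x = tlf e then 1 else 0) - (if {x,y}=e \<and> y = tlf e then 1 else 0)) * (c e::rat))
     = (\<Sum>e\<in>E. if e = {x,y} then ((if {x,y}={x,y} \<and> x = tlf {x,y} then 1 else 0) - (if {x,y}={x,y} \<and> y = tlf {x,y} then 1 else 0)) * c {x,y} else 0)"
    by (rule sum.cong) auto
  also have "\<dots> = ((if {x,y}={x,y} \<and> x = tlf {x,y} then 1 else 0) - (if {x,y}={x,y} \<and> y = tlf {x,y} then 1 else 0)) * c {x,y}"
    using assms by (simp add: sum.delta)
  finally show ?thesis .
qed


lemma circ_sts_shape:
  assumes "circuit F C" "s \<in> circ_sts C"
  shows "\<exists>a b. s = {a,b} \<and> a \<noteq> b \<and> a \<in> halfs F \<and> b \<in> halfs F \<and> inc F a = inc F b"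
proof -
  obtain W0 where cw: "closed_walk F W0" and C: "C = {W'. \<exists>k. W' = rotate k W0 \<or> W' = rotate k (reverse_walk W0)}"
    using assms(1) unfolding circuit_def by blast
  obtain a b W' where s: "s = {a,b}" and ab: "(a,b) \<in> set W'" and W': "W' \<in> C"
    using assms(2) unfolding circ_sts_def by auto
  have "(a,b) \<in> set W0 \<or> (b,a) \<in> set W0"
    using ab W' unfolding C reverse_walk_def by auto
  then show ?thesis
  proof (elim disjE)
    assume "(a,b) \<in> set W0"
    then have "a \<noteq> b \<and> a \<in> halfs F \<and> b \<in> halfs F \<and> inc F a = inc F b"
      using cw unfolding closed_walk_def dir_single_trans_def by fastforce
    then show ?thesis using s by blast
  next
    assume "(b,a) \<in> set W0"
    then have "a \<noteq> b \<and> a \<in> halfs F \<and> b \<in> halfs F \<and> inc F a = inc F b"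
      using cw unfolding closed_walk_def dir_single_trans_def by fastforce
    then show ?thesis using s by blast
  qed
qed

theorem mainTheorem8:
  fixes F :: "('v, 'h) hgraph"
    and tlf :: "'h set \<Rightarrow> 'h"
    and ori :: "'h set set \<Rightarrow> 'h set"
    and Gam :: "('h \<times> 'h) list set"
    and P :: "('h \<times> 'h) list set set"
  assumes "graph_wf F"
    and "four_regular F"
    and "directed_version F tlf"
    and "trans_orientation F ori"
    and "\<forall>W\<in>Gam. closed_walk F W"
    and "circuit_partition F P"
  shows "\<forall>W\<in>Gam. \<forall>t\<in>tau F P.
           of_int (cycle_matrix (touch_graph F P) (pi_walk P ` Gam) (tch_tail ori) (pi_walk P W) t)
           = (\<Sum>e\<in>edges F. of_int (cycle_matrix F Gam tlf W e) * Delta F tlf ori e t)"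
proof (intro ballI)
  fix W t assume WG: "W \<in> Gam" and tt: "t \<in> tau F P"
  have cw: "closed_walk F W" using WG assms(5) by blast
  have tf: "t \<in> ftrans F" and tc: "\<forall>s\<in>t. \<exists>C\<in>P. s \<in> circ_sts C"
    using tt unfolding tau_def by auto
  obtain s1 s2 v where t12: "t = {s1,s2}" and v: "v \<in> verts F" and st1: "single_trans F s1"
    and st2: "single_trans F s2" and dis: "s1 \<inter> s2 = {}" and un: "s1 \<union> s2 = {h\<in>halfs F. inc F h = v}"
    using tf unfolding ftrans_def by blast
  have ne1: "s1 \<noteq> {}" using st1 unfolding single_trans_def by auto
  have s12: "s1 \<noteq> s2" using ne1 dis by auto
  define Ob where "Ob = ori t"
  define Tt where "Tt = tch_tail ori t"
  have Obt: "Ob \<in> t" using tf assms(4) unfolding trans_orientation_def Ob_def by blast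
  have Tt_eq: "Tt = (if Ob = s1 then s2 else s1)"
    unfolding Tt_def tch_tail_def Ob_def[symmetric] using Obt s12 t12 by (auto intro!: the_equality)
  have tTO: "t = {Tt, Ob}" using Tt_eq Obt t12 by auto
  have TOne: "Tt \<noteq> Ob" using Tt_eq Obt t12 s12 by auto
  have TOdis: "Tt \<inter> Ob = {}" using Tt_eq Obt t12 dis by auto
  have TOun: "Tt \<union> Ob = {h\<in>halfs F. inc F h = v}" using Tt_eq Obt t12 un by auto
  have Tst: "single_trans F Tt" using Tt_eq st1 st2 by auto
  obtain CO where CO: "CO \<in> P" "Ob \<in> circ_sts CO" using tc Obt by blast
  have circ: "\<And>C. C \<in> P \<Longrightarrow> circuit F C" using assms(6) unfolding circuit_partition_def by blast
  have ex1: "\<And>h. h \<in> halfs F \<Longrightarrow> \<exists>!(C, s). C \<in> P \<and> s \<in> circ_sts C \<and> h \<in> s"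
    using assms(6) unfolding circuit_partition_def by blast
  have uniq: "s = s'" if "x \<in> halfs F" "C \<in> P" "C' \<in> P" "s \<in> circ_sts C" "s' \<in> circ_sts C'"
    "x \<in> s" "x \<in> s'" for x C C' s s'
  proof -
    have "\<exists>!p. (case p of (C, s) \<Rightarrow> C \<in> P \<and> s \<in> circ_sts C \<and> x \<in> s)" using ex1[OF that(1)] .
    then have "(C, s) = (C', s')" using that by (metis (mono_tags, lifting) case_prod_conv)
    then show ?thesis by simp
  qed
  have st_eq: "st_of P h = s" if "h \<in> halfs F" "C \<in> P" "s \<in> circ_sts C" "h \<in> s" for h C s
    unfolding st_of_def
  proof (rule the_equality)
    show "\<exists>C\<in>P. s \<in> circ_sts C \<and> h \<in> s" using that by blast
  next
    fix s' assume "\<exists>C\<in>P. s' \<in> circ_sts C \<and> h \<in> s'"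
    then show "s' = s" using uniq that by blast
  qed
  have st_ex: "\<exists>C\<in>P. st_of P h \<in> circ_sts C \<and> h \<in> st_of P h" if hh: "h \<in> halfs F" for h
  proof -
    obtain C s where "C \<in> P" "s \<in> circ_sts C" "h \<in> s" using ex1[OF hh] by blast
    then show ?thesis using st_eq[OF hh] by metis
  qed
  have Obh: "Ob \<subseteq> {h\<in>halfs F. inc F h = v}" using TOun by blast
  have stOb: "st_of P h = Ob" if "h \<in> Ob" for h
    using st_eq[OF _ CO that] that Obh by blast
  have stnOb: "st_of P h \<noteq> Ob" if "h \<in> halfs F" "h \<notin> Ob" for h
    using st_ex[OF that(1)] that(2) by auto
  have other: "st_of P h2 = Tt" if th: "h1 \<in> Ob" "h2 \<in> halfs F" "h2 \<notin> Ob" "inc F h1 = inc F h2" for h1 h2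
  proof -
    obtain C where C: "C \<in> P" "st_of P h2 \<in> circ_sts C" "h2 \<in> st_of P h2" using st_ex[OF th(2)] by blast
    obtain a b where ab: "st_of P h2 = {a,b}" "a \<noteq> b" "a \<in> halfs F" "b \<in> halfs F" "inc F a = inc F b"
      using circ_sts_shape[OF circ[OF C(1)] C(2)] by blast
    have iv: "inc F h2 = v" using th(1,4) Obh by auto
    have abv: "inc F a = v" "inc F b = v" using ab C(3) iv by auto
    have "a \<notin> Ob"
    proof
      assume "a \<in> Ob"
      then have "st_of P h2 = Ob" using uniq[OF ab(3) C(1) CO(1) C(2) CO(2)] ab(1) by auto
      then show False using C(3) th(3) by simp
    qed
    moreover have "b \<notin> Ob"
    proof
      assume "b \<in> Ob"
      then have "st_of P h2 = Ob" using uniq[OF ab(4) C(1) CO(1) C(2) CO(2)] ab(1) by auto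
      then show False using C(3) th(3) by simp
    qed
    ultimately have "a \<in> Tt" "b \<in> Tt" using TOun abv ab(3,4) by blast+
    moreover obtain c d where "Tt = {c,d}" "c \<noteq> d" using Tst unfolding single_trans_def by blast
    ultimately show ?thesis using ab(1,2) by auto
  qed
  define phi where "phi = (\<lambda>(a::'h set, b::'h set). (if {a,b} = t \<and> a = Tt then 1 else 0)
      - (if {a,b} = t \<and> b = Tt then 1 else (0::rat)))"
  have pair: "phi (st_of P h, st_of P h') = (if h' \<in> Ob then 1 else 0) - (if h \<in> Ob then 1 else 0)"
    if hp: "(h, h') \<in> set W" for h h'
  proof -
    have d: "h \<in> halfs F" "h' \<in> halfs F" "inc F h = inc F h'"
      using cw hp unfolding closed_walk_def dir_single_trans_def by auto
    consider (a) "h \<in> Ob" "h' \<in> Ob" | (b) "h \<in> Ob" "h' \<notin> Ob"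
      | (c) "h \<notin> Ob" "h' \<in> Ob" | (d) "h \<notin> Ob" "h' \<notin> Ob" by blast
    then show ?thesis
    proof cases
      case a then show ?thesis using stOb by (simp add: phi_def)
    next
      case b
      have "st_of P h = Ob" "st_of P h' = Tt" using b stOb other[of h h'] d by auto
      then show ?thesis using b tTO TOne by (simp add: phi_def insert_commute)
    next
      case c
      have "st_of P h' = Ob" "st_of P h = Tt" using c stOb other[of h' h] d by auto
      then show ?thesis using c tTO TOne by (simp add: phi_def)
    next
      case d
      have "st_of P h \<noteq> Ob" "st_of P h' \<noteq> Ob" using d stnOb \<open>h \<in> halfs F\<close> \<open>h' \<in> halfs F\<close> by auto
      then have "{st_of P h, st_of P h'} \<noteq> t" using tTO by auto
      then show ?thesis using d by (simp add: phi_def)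
    qed
  qed
  have tedges: "t \<in> edges (touch_graph F P)" using tt by (simp add: touch_graph_def tch_def)
  have "(of_int (cycle_matrix (touch_graph F P) (pi_walk P ` Gam) (tch_tail ori) (pi_walk P W) t) :: rat)
      = of_int (sigma_trav (tch_tail ori) (pi_pairs P W) t)"
    using WG tedges by (simp add: cycle_matrix_def cw_sigma_def pi_walk_def trav_wot)
  also have "\<dots> = sum_list (map phi (pi_pairs P W))"
    unfolding sigma_sum phi_def Tt_def by simp
  also have "\<dots> = sum_list (map phi (map (\<lambda>(h, h'). (st_of P h, st_of P h')) W))"
    unfolding pi_pairs_def by (rule sum_filter_irrel) (auto simp: phi_def)
  also have "\<dots> = sum_list (map (\<lambda>(h,h'). (if h' \<in> Ob then 1 else 0) - (if h \<in> Ob then 1 else (0::rat))) W)"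
    unfolding map_map
    by (rule arg_cong[where f = sum_list], rule map_cong) (auto simp: pair)
  finally have LHS: "(of_int (cycle_matrix (touch_graph F P) (pi_walk P ` Gam) (tch_tail ori) (pi_walk P W) t) :: rat)
      = sum_list (map (\<lambda>(h,h'). (if h' \<in> Ob then 1 else 0) - (if h \<in> Ob then 1 else (0::rat))) W)" .
  have finE: "finite (edges F)"
  proof -
    have "edges F \<subseteq> Pow (halfs F)" using assms(1) unfolding graph_wf_def by auto
    moreover have "finite (halfs F)" using assms(1) unfolding graph_wf_def by auto
    ultimately show ?thesis by (meson finite_Pow_iff finite_subset)
  qed
  let ?psi = "\<lambda>e (x, y). (if {x,y} = e \<and> x = tlf e then 1 else 0) - (if {x,y} = e \<and> y = tlf e then 1 else (0::rat))"
  have "(\<Sum>e\<in>edges F. of_int (cycle_matrix F Gam tlf W e) * Delta F tlf ori e t)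
      = (\<Sum>e\<in>edges F. sum_list (map (?psi e) (traversals W)) * Delta F tlf ori e t)"
    using WG by (intro sum.cong) (simp_all add: cycle_matrix_def cw_sigma_def sigma_sum)
  also have "\<dots> = sum_list (map (\<lambda>p. \<Sum>e\<in>edges F. ?psi e p * Delta F tlf ori e t) (traversals W))"
    by (rule swap_sum)
  also have "\<dots> = sum_list (map (\<lambda>(x,y). (if x \<in> Ob then 1 else 0) - (if y \<in> Ob then 1 else (0::rat))) (traversals W))"
  proof (rule arg_cong[where f = sum_list], rule map_cong[OF refl])
    fix p assume "p \<in> set (traversals W)"
    then obtain i where i: "i < length W" and p: "p = (snd (W ! i), fst (W ! (Suc i mod length W)))"
      unfolding traversals_def by auto
    define x where "x = snd (W ! i)"
    define y where "y = fst (W ! (Suc i mod length W))"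
    have e: "{x,y} \<in> edges F" using cw i unfolding closed_walk_def x_def y_def by blast
    have "card {x,y} = 2" using e assms(1) unfolding graph_wf_def by blast
    then have xy: "x \<noteq> y" by auto
    have tl: "tlf {x,y} \<in> {x,y}" using e assms(3) unfolding directed_version_def by blast
    have "(\<Sum>e\<in>edges F. ?psi e (x,y) * Delta F tlf ori e t) = ?psi {x,y} (x,y) * Delta F tlf ori {x,y} t"
      using sum_edge[OF finE e, of tlf "\<lambda>e. Delta F tlf ori e t"] by simp
    also have "\<dots> = (if x \<in> Ob then 1 else 0) - (if y \<in> Ob then 1 else (0::rat))"
      using delta_trav[of x y F tlf t ori, OF xy e tl tf] unfolding Ob_def by simp
    finally show "(\<Sum>e\<in>edges F. ?psi e p * Delta F tlf ori e t)
        = (\<lambda>(x,y). (if x \<in> Ob then 1 else 0) - (if y \<in> Ob then 1 else (0::rat))) p"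
      using p x_def y_def by simp
  qed
  also have "\<dots> = sum_list (map (\<lambda>(h,h'). (if h' \<in> Ob then 1 else 0) - (if h \<in> Ob then 1 else (0::rat))) W)"
    by (rule telescope)
  finally show "of_int (cycle_matrix (touch_graph F P) (pi_walk P ` Gam) (tch_tail ori) (pi_walk P W) t)
           = (\<Sum>e\<in>edges F. of_int (cycle_matrix F Gam tlf W e) * Delta F tlf ori e t)"
    using LHS by simp
qed

end
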